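(* Let $f\colon X\to X$ be an expansive homeomorphism of a compact metric space $X$. Then there are $\delta>0$ and a continuous function $\mathcal L\colon\mathcal K_\delta(X)\to\mathbb{R}$ such that: 1. $\mathcal L(A)\ge0$ for all $A\in\mathcal K_\delta(X)$, with equality if and only if $A$ is a singleton; 2. $\ddot{\mathcal L}=\mathcal L$, i.e. $\mathcal L(f(A))-2\mathcal L(A)+\mathcal L(f^{-1}(A))=\mathcal L(A)$ whenever $f(A),A,f^{-1}(A)\in\mathcal K_\delta(X)$.
   Context: A homeomorphism $f$ of a compact metric space $(X,\operatorname{dist})$ is expansive if there is $\delta>0$ such that $\operatorname{dist}(f^n(x),f^n(y))\le\delta$ for all $n\in\mathbb{Z}$ implies $x=y$. $\mathcal K(X)$ is the space of nonempty compact subsets of $X$ with the Hausdorff distance, and $\mathcal K_\delta(X)=\{A\in\mathcal K(X):\operatorname{diam}(A)\le\delta\}$. *)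

theory Defs
  imports "HOL-Analysis.Analysis"
begin

definition hausdist :: "'a::metric_space set \<Rightarrow> 'a set \<Rightarrow> real" where
  "hausdist A B = max (SUP a\<in>A. infdist a B) (SUP b\<in>B. infdist b A)"

definition hyperspace :: "'a::metric_space set \<Rightarrow> 'a set set" where
  "hyperspace X = {A. A \<subseteq> X \<and> A \<noteq> {} \<and> compact A}"

definition hyperspace_diam :: "real \<Rightarrow> 'a::metric_space set \<Rightarrow> 'a set set" where
  "hyperspace_diam \<delta> X = {A \<in> hyperspace X. diameter A \<le> \<delta>}"

text \<open>Expansiveness of a homeomorphism f of X with inverse g:
  f^n for n \<ge> 0 and g^n = f^(-n) cover all integer iterates.\<close>
definition expansive_on :: "'a::metric_space set \<Rightarrow> ('a \<Rightarrow> 'a) \<Rightarrow> ('a \<Rightarrow> 'a) \<Rightarrow> bool" where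
  "expansive_on X f g \<longleftrightarrow> (\<exists>\<delta>>0. \<forall>x\<in>X. \<forall>y\<in>X.
      ((\<forall>n. dist ((f^^n) x) ((f^^n) y) \<le> \<delta>) \<and> (\<forall>n. dist ((g^^n) x) ((g^^n) y) \<le> \<delta>))
      \<longrightarrow> x = y)"

definition hcontinuous_on :: "'a::metric_space set set \<Rightarrow> ('a set \<Rightarrow> real) \<Rightarrow> bool" where
  "hcontinuous_on K L \<longleftrightarrow> (\<forall>A\<in>K. \<forall>e>0. \<exists>d>0. \<forall>B\<in>K. hausdist A B < d \<longrightarrow> \<bar>L B - L A\<bar> < e)"

end

theory Submission
  imports Defs
begin

lemma funpow_homeo:
  assumes "homeomorphism X X f g"
  shows "continuous_on X (f^^n) \<and> (f^^n) ` X \<subseteq> X"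
proof (induction n)
  case 0 then show ?case by (simp add: continuous_on_id)
next
  case (Suc n)
  have cf: "continuous_on X f" and fX: "f ` X = X" using assms by (auto simp: homeomorphism_def)
  have "continuous_on X (f \<circ> (f^^n))"
    using Suc cf by (meson continuous_on_compose continuous_on_subset)
  moreover have "(f \<circ> f^^n) ` X \<subseteq> X" using Suc fX by (auto simp: image_comp[symmetric])
  ultimately show ?case by simp
qed

lemma compact_funpow_image:
  assumes "homeomorphism X X f g" "compact A" "A \<subseteq> X"
  shows "compact ((f^^n) ` A)" "(f^^n) ` A \<subseteq> X"
  using funpow_homeo[OF assms(1), of n] assms(2,3)
  by (auto intro: compact_continuous_image continuous_on_subset)

lemma infdist_le_hausdist:
  fixes A B :: "'a::metric_space set"
  assumes "compact A" "compact B" "b \<in> B"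
  shows "infdist b A \<le> hausdist A B"
proof -
  have "bdd_above ((\<lambda>b. infdist b A) ` B)"
    by (intro bounded_imp_bdd_above compact_imp_bounded compact_continuous_image
        continuous_on_infdist continuous_on_id assms)
  then have "infdist b A \<le> (SUP b\<in>B. infdist b A)" using assms(3) by (rule cSUP_upper2) simp
  then show ?thesis unfolding hausdist_def by linarith
qed

lemma hausdist_sym: "hausdist A B = hausdist B A"
  unfolding hausdist_def by (simp add: max.commute)

lemma infdist_lessE:
  assumes "infdist x A < d" "A \<noteq> {}"
  shows "\<exists>a\<in>A. dist x a < d"
proof -
  have "Inf (dist x ` A) < d" using assms by (simp add: infdist_def)
  then show ?thesis using assms(2) cInf_lessD[of "dist x ` A" d] by auto
qed

lemma diam_one_side:
  fixes F :: "'a::metric_space \<Rightarrow> 'a"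
  assumes X: "compact X" and F: "continuous_on X F" and e: "e > 0"
    and d: "\<And>x x'. x \<in> X \<Longrightarrow> x' \<in> X \<Longrightarrow> dist x' x < d \<Longrightarrow> dist (F x') (F x) < e"
    and A: "A \<in> hyperspace X" and B: "B \<in> hyperspace X" and h: "hausdist A B < d"
  shows "diameter (F ` B) \<le> diameter (F ` A) + 2 * e"
proof -
  have cA: "compact A" "A \<subseteq> X" "A \<noteq> {}" and cB: "compact B" "B \<subseteq> X" "B \<noteq> {}"
    using A B by (auto simp: hyperspace_def)
  have cFA: "compact (F ` A)" using cA F by (meson compact_continuous_image continuous_on_subset)
  have cFB: "compact (F ` B)" using cB F by (meson compact_continuous_image continuous_on_subset)
  obtain x y where xy: "x \<in> B" "y \<in> B" "dist (F x) (F y) = diameter (F ` B)"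
    using diameter_compact_attained[OF cFB] cB(3) by auto
  have "infdist x A < d" using infdist_le_hausdist[OF cA(1) cB(1) xy(1)] h by linarith
  then obtain x' where x': "x' \<in> A" "dist x x' < d" using infdist_lessE cA(3) by blast
  have "infdist y A < d" using infdist_le_hausdist[OF cA(1) cB(1) xy(2)] h by linarith
  then obtain y' where y': "y' \<in> A" "dist y y' < d" using infdist_lessE cA(3) by blast
  have 1: "dist (F x) (F x') < e" using d[of x' x] x' xy cA cB by (auto simp: dist_commute)
  have 2: "dist (F y') (F y) < e" using d[of y y'] y' xy cA cB by (auto simp: dist_commute)
  have 3: "dist (F x') (F y') \<le> diameter (F ` A)"
    using x' y' by (intro diameter_bounded_bound compact_imp_bounded cFA) auto
  have "dist (F x) (F y) \<le> dist (F x) (F x') + dist (F x') (F y') + dist (F y') (F y)"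
    using dist_triangle[of "F x" "F y" "F x'"] dist_triangle[of "F x'" "F y" "F y'"] by linarith
  then show ?thesis using xy 1 2 3 by linarith
qed

lemma diam_cont:
  fixes F :: "'a::metric_space \<Rightarrow> 'a"
  assumes X: "compact X" and F: "continuous_on X F" and e: "e > 0"
  shows "\<exists>d>0. \<forall>A\<in>hyperspace X. \<forall>B\<in>hyperspace X. hausdist A B < d \<longrightarrow>
           \<bar>diameter (F ` B) - diameter (F ` A)\<bar> < e"
proof -
  have uc: "uniformly_continuous_on X F" by (rule compact_uniformly_continuous[OF F X])
  have e3: "e/3 > 0" using e by simp
  have "\<exists>d>0. \<forall>x\<in>X. \<forall>x'\<in>X. dist x' x < d \<longrightarrow> dist (F x') (F x) < e/3"
    using uc e3 unfolding uniformly_continuous_on_def by blast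
  then obtain d where d: "d > 0" "\<And>x x'. x \<in> X \<Longrightarrow> x' \<in> X \<Longrightarrow> dist x' x < d \<Longrightarrow> dist (F x') (F x) < e/3"
    by blast
  show ?thesis
  proof (intro exI[of _ d] conjI ballI impI d(1))
    fix A B assume A: "A \<in> hyperspace X" and B: "B \<in> hyperspace X" and h: "hausdist A B < d"
    have "diameter (F ` B) \<le> diameter (F ` A) + 2 * (e/3)"
      using diam_one_side[OF X F _ d(2) A B h] e by simp
    moreover have "diameter (F ` A) \<le> diameter (F ` B) + 2 * (e/3)"
      using diam_one_side[OF X F _ d(2) B A] h e by (simp add: hausdist_sym)
    ultimately show "\<bar>diameter (F ` B) - diameter (F ` A)\<bar> < e" using e by linarith
  qed
qed


definition hh :: "real \<Rightarrow> real \<Rightarrow> real" where "hh \<delta> d = max 0 (d - \<delta>)"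

lemma hh_lip: "\<bar>hh \<delta> u - hh \<delta> v\<bar> \<le> \<bar>u - v\<bar>"
  unfolding hh_def by auto

lemma hh_bounds:
  assumes "homeomorphism X X f g" "compact X" "compact A" "A \<subseteq> X"
  shows "0 \<le> hh \<delta> (diameter ((f^^n) ` A))" "\<delta> \<ge> 0 \<Longrightarrow> hh \<delta> (diameter ((f^^n) ` A)) \<le> diameter X"
proof -
  show "0 \<le> hh \<delta> (diameter ((f^^n) ` A))" by (simp add: hh_def)
  assume d: "\<delta> \<ge> 0"
  have "diameter ((f^^n) ` A) \<le> diameter X"
    using compact_funpow_image[OF assms(1,3,4)] assms(2) by (intro diameter_subset compact_imp_bounded)
  moreover have "0 \<le> diameter X" using assms(2) by (intro diameter_ge_0 compact_imp_bounded)
  ultimately show "hh \<delta> (diameter ((f^^n) ` A)) \<le> diameter X" using d by (simp add: hh_def)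
qed

lemma summable_hh:
  assumes "homeomorphism X X f g" "compact X" "compact A" "A \<subseteq> X" "\<delta> \<ge> 0" "0 \<le> q" "q < 1"
  shows "summable (\<lambda>n. q^n * hh \<delta> (diameter ((f^^n) ` A)))"
proof (rule summable_comparison_test')
  show "summable (\<lambda>n. diameter X * q^n)" using assms by (intro summable_mult summable_geometric) simp
  fix n
  show "norm (q^n * hh \<delta> (diameter ((f^^n) ` A))) \<le> diameter X * q^n"
    using hh_bounds[OF assms(1-4), of \<delta> n] assms(5,6)
    by (simp add: abs_mult) (metis mult.commute mult_left_mono zero_le_power)
qed

definition Sf :: "('a::metric_space \<Rightarrow> 'a) \<Rightarrow> real \<Rightarrow> real \<Rightarrow> 'a set \<Rightarrow> real" where
  "Sf f \<delta> q A = (\<Sum>n. q^n * hh \<delta> (diameter ((f^^n) ` A)))"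

lemma Sf_f:
  assumes "homeomorphism X X f g" "compact X" "compact A" "A \<subseteq> X" "\<delta> \<ge> 0" "0 < q" "q < 1"
    and "hh \<delta> (diameter A) = 0"
  shows "Sf f \<delta> q (f ` A) = Sf f \<delta> q A / q"
proof -
  let ?c = "\<lambda>n. q^n * hh \<delta> (diameter ((f^^n) ` A))"
  have sc: "summable ?c" using summable_hh[OF assms(1-5), of q] assms(6,7) by simp
  have im: "\<And>n. (f^^n) ` (f ` A) = (f^^Suc n) ` A"
    by (simp only: funpow_Suc_right image_comp)
  have eq: "\<And>n. q^n * hh \<delta> (diameter ((f^^n) ` (f ` A))) = ?c (Suc n) / q"
    using assms(6) unfolding im by simp
  have ss: "summable (\<lambda>n. ?c (Suc n))" by (rule summable_Suc_iff[THEN iffD2, OF sc])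
  have "Sf f \<delta> q (f ` A) = (\<Sum>n. ?c (Suc n) / q)" unfolding Sf_def eq ..
  also have "\<dots> = (\<Sum>n. ?c (Suc n)) / q"
    by (rule suminf_divide[OF ss])
  also have "\<dots> = (suminf ?c - ?c 0) / q" using suminf_split_head[OF sc] by simp
  also have "\<dots> = Sf f \<delta> q A / q" using assms(8) by (simp add: Sf_def)
  finally show ?thesis .
qed

lemma Sf_g:
  assumes "homeomorphism X X f g" "compact X" "compact A" "A \<subseteq> X" "\<delta> \<ge> 0" "0 < q" "q < 1"
    and "hh \<delta> (diameter (g ` A)) = 0"
  shows "Sf f \<delta> q (g ` A) = q * Sf f \<delta> q A"
proof -
  have h: "homeomorphism X X g f" using assms(1) by (rule homeomorphism_symD)
  let ?c = "\<lambda>n. q^n * hh \<delta> (diameter ((f^^n) ` A))"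
  let ?d = "\<lambda>n. q^n * hh \<delta> (diameter ((f^^n) ` (g ` A)))"
  have sc: "summable ?c" using summable_hh[OF assms(1-5), of q] assms(6,7) by simp
  have gA: "compact (g ` A)" "g ` A \<subseteq> X" using compact_funpow_image[OF h assms(3,4), of "Suc 0"] by simp_all
  have sd: "summable ?d" using summable_hh[OF assms(1,2) gA assms(5), of q] assms(6,7) by simp
  have fgx: "\<And>y. y \<in> A \<Longrightarrow> f (g y) = y" using assms(1,4) unfolding homeomorphism_def by blast
  have fg: "f ` (g ` A) = A" unfolding image_image using fgx by (metis (no_types) image_cong image_ident)
  have im: "\<And>n. (f^^Suc n) ` (g ` A) = (f^^n) ` A"
    by (simp only: funpow_Suc_right image_comp[symmetric] fg)
  have eq: "\<And>n. ?d (Suc n) = q * ?c n"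
    unfolding im by simp
  have "Sf f \<delta> q (g ` A) = suminf ?d" unfolding Sf_def ..
  also have "\<dots> = (\<Sum>n. ?d (Suc n)) + ?d 0" using suminf_split_head[OF sd] by simp
  also have "\<dots> = (\<Sum>n. q * ?c n)"
  proof -
    have e1: "(\<lambda>n. ?d (Suc n)) = (\<lambda>n. q * ?c n)" by (rule ext) (rule eq)
    have e0: "?d 0 = 0" using assms(8) by simp
    show ?thesis by (simp only: e1 e0 add_0_right)
  qed
  also have "\<dots> = q * Sf f \<delta> q A" using suminf_mult[OF sc] by (simp add: Sf_def)
  finally show ?thesis .
qed


lemma Sf_fin:
  assumes h: "homeomorphism X X f g" and X: "compact X" and A: "A \<in> hyperspace X"
    and q: "0 \<le> q" "q \<le> 1"
  shows "\<forall>e>0. \<exists>d>0. \<forall>B\<in>hyperspace X. hausdist A B < d \<longrightarrow>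
     \<bar>\<Sum>n<N. q^n * (hh \<delta> (diameter ((f^^n) ` B)) - hh \<delta> (diameter ((f^^n) ` A)))\<bar> < e"
proof (induction N)
  case 0
  then show ?case by (auto intro: exI[of _ 1])
next
  case (Suc N)
  show ?case
  proof (intro allI impI)
    fix e :: real assume e: "e > 0"
    obtain d1 where d1: "d1 > 0" "\<And>B. B\<in>hyperspace X \<Longrightarrow> hausdist A B < d1 \<Longrightarrow>
     \<bar>\<Sum>n<N. q^n * (hh \<delta> (diameter ((f^^n) ` B)) - hh \<delta> (diameter ((f^^n) ` A)))\<bar> < e/2"
      using Suc e by (meson half_gt_zero)
    have cN: "continuous_on X (f^^N)" using funpow_homeo[OF h] by blast
    obtain d2 where d2: "d2 > 0" "\<And>B. B\<in>hyperspace X \<Longrightarrow> hausdist A B < d2 \<Longrightarrow>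
       \<bar>diameter ((f^^N) ` B) - diameter ((f^^N) ` A)\<bar> < e/2"
      using diam_cont[OF X cN, of "e/2"] e A by auto
    show "\<exists>d>0. \<forall>B\<in>hyperspace X. hausdist A B < d \<longrightarrow>
     \<bar>\<Sum>n<Suc N. q^n * (hh \<delta> (diameter ((f^^n) ` B)) - hh \<delta> (diameter ((f^^n) ` A)))\<bar> < e"
    proof (intro exI[of _ "min d1 d2"] conjI ballI impI)
      show "min d1 d2 > 0" using d1 d2 by simp
      fix B assume B: "B \<in> hyperspace X" and hB: "hausdist A B < min d1 d2"
      let ?u = "hh \<delta> (diameter ((f^^N) ` B)) - hh \<delta> (diameter ((f^^N) ` A))"
      have "\<bar>?u\<bar> < e/2"
        using hh_lip[of \<delta> "diameter ((f^^N) ` B)" "diameter ((f^^N) ` A)"] d2(2)[OF B] hB by simp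
      moreover have "\<bar>q^N * ?u\<bar> \<le> \<bar>?u\<bar>"
        using q by (simp add: abs_mult mult_left_le_one_le power_le_one)
      moreover have "\<bar>\<Sum>n<N. q^n * (hh \<delta> (diameter ((f^^n) ` B)) - hh \<delta> (diameter ((f^^n) ` A)))\<bar> < e/2"
        using d1(2)[OF B] hB by simp
      moreover note abs_triangle_ineq[of "\<Sum>n<N. q^n * (hh \<delta> (diameter ((f^^n) ` B)) - hh \<delta> (diameter ((f^^n) ` A)))" "q^N * ?u"]
      ultimately show "\<bar>\<Sum>n<Suc N. q^n * (hh \<delta> (diameter ((f^^n) ` B)) - hh \<delta> (diameter ((f^^n) ` A)))\<bar> < e"
        unfolding sum.lessThan_Suc by linarith
    qed
  qed
qed

lemma Sf_cont:
  assumes h: "homeomorphism X X f g" and X: "compact X" and A: "A \<in> hyperspace X"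
    and dl: "\<delta> \<ge> 0" and q: "0 < q" "q < 1" and e: "e > 0"
  shows "\<exists>d>0. \<forall>B\<in>hyperspace X. hausdist A B < d \<longrightarrow> \<bar>Sf f \<delta> q B - Sf f \<delta> q A\<bar> < e"
proof -
  define D where "D = diameter X"
  have D0: "D \<ge> 0" unfolding D_def using X by (intro diameter_ge_0 compact_imp_bounded)
  have "e * (1 - q) / (4 * (D + 1)) > 0" using e q D0 by simp
  then obtain N where N: "q^N < e * (1 - q) / (4 * (D + 1))" using real_arch_pow_inv q(2) by blast
  have tail: "q^N * D / (1 - q) < e/2"
  proof -
    have "q^N * D \<le> q^N * (D + 1)" using q by simp
    also have "\<dots> < e * (1 - q) / (4 * (D + 1)) * (D + 1)" using N D0 by (intro mult_strict_right_mono) auto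
    also have "\<dots> = e * (1 - q) / 4" using D0 by (simp add: field_simps)
    finally have "q^N * D < e * (1 - q) / 4" .
    then have "q^N * D / (1 - q) < e / 4" using q by (simp add: divide_simps mult.commute)
    then show ?thesis using e by linarith
  qed
  obtain d where d: "d > 0" "\<And>B. B\<in>hyperspace X \<Longrightarrow> hausdist A B < d \<Longrightarrow>
     \<bar>\<Sum>n<N. q^n * (hh \<delta> (diameter ((f^^n) ` B)) - hh \<delta> (diameter ((f^^n) ` A)))\<bar> < e/2"
    using Sf_fin[OF h X A, of q \<delta> N] q e by (meson half_gt_zero less_imp_le)
  show ?thesis
  proof (intro exI[of _ d] conjI ballI impI d(1))
    fix B assume B: "B \<in> hyperspace X" and hB: "hausdist A B < d"
    have cA: "compact A" "A \<subseteq> X" and cB: "compact B" "B \<subseteq> X"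
      using A B by (auto simp: hyperspace_def)
    define c where "c n = q^n * (hh \<delta> (diameter ((f^^n) ` B)) - hh \<delta> (diameter ((f^^n) ` A)))" for n
    have sA: "summable (\<lambda>n. q^n * hh \<delta> (diameter ((f^^n) ` A)))"
      using summable_hh[OF h X cA dl, of q] q by simp
    have sB: "summable (\<lambda>n. q^n * hh \<delta> (diameter ((f^^n) ` B)))"
      using summable_hh[OF h X cB dl, of q] q by simp
    have sc: "summable c" unfolding c_def right_diff_distrib using summable_diff[OF sB sA] .
    have dif: "suminf c = Sf f \<delta> q B - Sf f \<delta> q A"
      unfolding c_def right_diff_distrib Sf_def using suminf_diff[OF sB sA] by simp
    have cb: "\<bar>c n\<bar> \<le> q^n * D" for n
    proof -
      have "\<bar>hh \<delta> (diameter ((f^^n) ` B)) - hh \<delta> (diameter ((f^^n) ` A))\<bar> \<le> D"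
        using hh_bounds[OF h X cA, of \<delta> n] hh_bounds[OF h X cB, of \<delta> n] dl unfolding D_def by linarith
      then show ?thesis unfolding c_def using q by (simp add: abs_mult mult_left_mono)
    qed
    have sg: "summable (\<lambda>n. q^N * D * q^n)" using q by (intro summable_mult summable_geometric) simp
    have cb2: "norm \<bar>c (n + N)\<bar> \<le> q^N * D * q^n" for n
      using cb[of "n+N"] by (simp add: power_add mult_ac)
    have sabs: "summable (\<lambda>n. \<bar>c (n + N)\<bar>)"
      by (rule summable_comparison_test'[OF sg]) (rule cb2)
    have "\<bar>suminf (\<lambda>n. c (n + N))\<bar> \<le> (\<Sum>n. \<bar>c (n + N)\<bar>)" by (rule summable_rabs[OF sabs])
    also have "\<dots> \<le> (\<Sum>n. q^N * D * q^n)"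
      using cb2 by (intro suminf_le sabs sg) simp
    also have "\<dots> = q^N * D / (1 - q)"
      using suminf_mult[of "\<lambda>n. q^n" "q^N * D"] summable_geometric[of q] suminf_geometric[of q] q by simp
    finally have "\<bar>suminf (\<lambda>n. c (n + N))\<bar> \<le> q^N * D / (1 - q)" .
    then have t: "\<bar>suminf (\<lambda>n. c (n + N))\<bar> < e/2" using tail by linarith
    have "suminf (\<lambda>n. c (n + N)) = suminf c - (\<Sum>n<N. c n)" by (rule suminf_minus_initial_segment[OF sc])
    then have "Sf f \<delta> q B - Sf f \<delta> q A = (\<Sum>n<N. c n) + suminf (\<lambda>n. c (n + N))" using dif by simp
    moreover have "\<bar>\<Sum>n<N. c n\<bar> < e/2" unfolding c_def using d(2)[OF B hB] .
    ultimately show "\<bar>Sf f \<delta> q B - Sf f \<delta> q A\<bar> < e" using t by linarith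
  qed
qed


lemma q_props: "0 < (3 - sqrt 5) / 2" "(3 - sqrt 5) / 2 < (1::real)"
  "1 / ((3 - sqrt 5) / 2) + (3 - sqrt 5) / 2 = (3::real)"
proof -
  have s5: "sqrt 5 * sqrt 5 = (5::real)" by simp
  have a: "sqrt 5 > (2::real)" by (rule real_less_rsqrt) simp
  have b: "sqrt 5 < (3::real)" by (rule real_sqrt_less_mono[of 5 9, simplified])
  show "0 < (3 - sqrt 5) / 2" using b by simp
  show "(3 - sqrt 5) / 2 < (1::real)" using a by simp
  have ne: "3 - sqrt 5 \<noteq> (0::real)" using b by simp
  show "1 / ((3 - sqrt 5) / 2) + (3 - sqrt 5) / 2 = (3::real)"
    using ne s5 by (simp add: field_simps)
qed

lemma hh_zero: "hh \<delta> x = 0 \<longleftrightarrow> x \<le> \<delta>"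
  unfolding hh_def by (cases "x \<le> \<delta>") (auto simp: max_def)

lemma Sf_nonneg:
  assumes "homeomorphism X X f g" "compact X" "compact A" "A \<subseteq> X" "\<delta> \<ge> 0" "0 \<le> q" "q < 1"
  shows "Sf f \<delta> q A \<ge> 0"
  unfolding Sf_def using summable_hh[OF assms] hh_bounds(1)[OF assms(1-4)] assms(6)
  by (intro suminf_nonneg) auto

lemma Sf_zero:
  assumes "homeomorphism X X f g" "compact X" "compact A" "A \<subseteq> X" "\<delta> \<ge> 0" "0 < q" "q < 1"
  shows "Sf f \<delta> q A = 0 \<longleftrightarrow> (\<forall>n. diameter ((f^^n) ` A) \<le> \<delta>)"
proof -
  have "Sf f \<delta> q A = 0 \<longleftrightarrow> (\<forall>n. q^n * hh \<delta> (diameter ((f^^n) ` A)) = 0)"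
    unfolding Sf_def using summable_hh[OF assms(1-5), of q] hh_bounds(1)[OF assms(1-4)] assms(6,7)
    by (intro suminf_eq_zero_iff) auto
  also have "\<dots> \<longleftrightarrow> (\<forall>n. diameter ((f^^n) ` A) \<le> \<delta>)"
    using assms(6) hh_zero by simp
  finally show ?thesis .
qed

theorem mainTheorem17:
  fixes X :: "'a::metric_space set" and f g :: "'a \<Rightarrow> 'a"
  assumes "compact X"
    and "homeomorphism X X f g"
    and "expansive_on X f g"
  shows "\<exists>\<delta>>0. \<exists>L :: 'a set \<Rightarrow> real.
           hcontinuous_on (hyperspace_diam \<delta> X) L
         \<and> (\<forall>A\<in>hyperspace_diam \<delta> X. L A \<ge> 0 \<and> (L A = 0 \<longleftrightarrow> (\<exists>x. A = {x})))
         \<and> (\<forall>A. f ` A \<in> hyperspace_diam \<delta> X \<and> A \<in> hyperspace_diam \<delta> X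
                 \<and> g ` A \<in> hyperspace_diam \<delta> X
               \<longrightarrow> L (f ` A) - 2 * L A + L (g ` A) = L A)"
proof -
  note X = assms(1) and h = assms(2)
  have h': "homeomorphism X X g f" using h by (rule homeomorphism_symD)
  obtain \<delta> where d0: "\<delta> > 0" and exp: "\<And>x y. x \<in> X \<Longrightarrow> y \<in> X \<Longrightarrow>
      (\<forall>n. dist ((f^^n) x) ((f^^n) y) \<le> \<delta>) \<Longrightarrow> (\<forall>n. dist ((g^^n) x) ((g^^n) y) \<le> \<delta>) \<Longrightarrow> x = y"
    using assms(3) unfolding expansive_on_def by blast
  have dl: "\<delta> \<ge> 0" using d0 by simp
  define q :: real where "q = (3 - sqrt 5) / 2"
  have q: "0 < q" "q < 1" "1 / q + q = 3" using q_props unfolding q_def by auto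
  define L where "L A = Sf f \<delta> q A + Sf g \<delta> q A" for A
  have hyp: "compact A" "A \<subseteq> X" "A \<noteq> {}" "diameter A \<le> \<delta>" if "A \<in> hyperspace_diam \<delta> X" for A
    using that by (auto simp: hyperspace_diam_def hyperspace_def)
  have P1: "hcontinuous_on (hyperspace_diam \<delta> X) L"
    unfolding hcontinuous_on_def
  proof (intro ballI allI impI)
    fix A e assume A: "A \<in> hyperspace_diam \<delta> X" and e: "(e::real) > 0"
    have AH: "A \<in> hyperspace X" using A by (simp add: hyperspace_diam_def)
    obtain d1 where d1: "d1 > 0" "\<forall>B\<in>hyperspace X. hausdist A B < d1 \<longrightarrow> \<bar>Sf f \<delta> q B - Sf f \<delta> q A\<bar> < e/2"
      using Sf_cont[OF h X AH dl q(1,2), of "e/2"] e by auto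
    obtain d2 where d2: "d2 > 0" "\<forall>B\<in>hyperspace X. hausdist A B < d2 \<longrightarrow> \<bar>Sf g \<delta> q B - Sf g \<delta> q A\<bar> < e/2"
      using Sf_cont[OF h' X AH dl q(1,2), of "e/2"] e by auto
    show "\<exists>d>0. \<forall>B\<in>hyperspace_diam \<delta> X. hausdist A B < d \<longrightarrow> \<bar>L B - L A\<bar> < e"
    proof (intro exI[of _ "min d1 d2"] conjI ballI impI)
      show "min d1 d2 > 0" using d1 d2 by simp
      fix B assume B: "B \<in> hyperspace_diam \<delta> X" and hB: "hausdist A B < min d1 d2"
      have BH: "B \<in> hyperspace X" using B by (simp add: hyperspace_diam_def)
      have t1: "\<bar>Sf f \<delta> q B - Sf f \<delta> q A\<bar> < e/2" using d1(2) BH hB by simp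
      have t2: "\<bar>Sf g \<delta> q B - Sf g \<delta> q A\<bar> < e/2" using d2(2) BH hB by simp
      show "\<bar>L B - L A\<bar> < e" using t1 t2 unfolding L_def abs_less_iff by linarith
    qed
  qed
  have P2: "L A \<ge> 0 \<and> (L A = 0 \<longleftrightarrow> (\<exists>x. A = {x}))" if A: "A \<in> hyperspace_diam \<delta> X" for A
  proof -
    note a = hyp[OF A]
    have n1: "Sf f \<delta> q A \<ge> 0" using Sf_nonneg[OF h X a(1,2) dl] q by simp
    have n2: "Sf g \<delta> q A \<ge> 0" using Sf_nonneg[OF h' X a(1,2) dl] q by simp
    have z: "L A = 0 \<longleftrightarrow> (\<forall>n. diameter ((f^^n) ` A) \<le> \<delta>) \<and> (\<forall>n. diameter ((g^^n) ` A) \<le> \<delta>)"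
      unfolding L_def add_nonneg_eq_0_iff[OF n1 n2]
      using Sf_zero[OF h X a(1,2) dl q(1,2)] Sf_zero[OF h' X a(1,2) dl q(1,2)] by simp
    have "(\<forall>n. diameter ((f^^n) ` A) \<le> \<delta>) \<and> (\<forall>n. diameter ((g^^n) ` A) \<le> \<delta>) \<longleftrightarrow> (\<exists>x. A = {x})"
    proof
      assume H: "(\<forall>n. diameter ((f^^n) ` A) \<le> \<delta>) \<and> (\<forall>n. diameter ((g^^n) ` A) \<le> \<delta>)"
      have "x = y" if xy: "x \<in> A" "y \<in> A" for x y
      proof (rule exp)
        show "x \<in> X" "y \<in> X" using xy a by auto
        show "\<forall>n. dist ((f^^n) x) ((f^^n) y) \<le> \<delta>"
        proof
          fix n
          have "dist ((f^^n) x) ((f^^n) y) \<le> diameter ((f^^n) ` A)"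
            using xy compact_funpow_image(1)[OF h a(1,2), of n]
            by (intro diameter_bounded_bound compact_imp_bounded) auto
          then show "dist ((f^^n) x) ((f^^n) y) \<le> \<delta>" using H by (meson order_trans)
        qed
        show "\<forall>n. dist ((g^^n) x) ((g^^n) y) \<le> \<delta>"
        proof
          fix n
          have "dist ((g^^n) x) ((g^^n) y) \<le> diameter ((g^^n) ` A)"
            using xy compact_funpow_image(1)[OF h' a(1,2), of n]
            by (intro diameter_bounded_bound compact_imp_bounded) auto
          then show "dist ((g^^n) x) ((g^^n) y) \<le> \<delta>" using H by (meson order_trans)
        qed
      qed
      then show "\<exists>x. A = {x}" using a(3) by blast
    next
      assume "\<exists>x. A = {x}"
      then obtain x where "A = {x}" by blast
      then show "(\<forall>n. diameter ((f^^n) ` A) \<le> \<delta>) \<and> (\<forall>n. diameter ((g^^n) ` A) \<le> \<delta>)"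
        using dl by simp
    qed
    then show ?thesis using z n1 n2 unfolding L_def by simp
  qed
  have P3: "L (f ` A) - 2 * L A + L (g ` A) = L A"
    if H: "f ` A \<in> hyperspace_diam \<delta> X \<and> A \<in> hyperspace_diam \<delta> X \<and> g ` A \<in> hyperspace_diam \<delta> X" for A
  proof -
    have a: "compact A" "A \<subseteq> X" "diameter A \<le> \<delta>" using hyp H by blast+
    have hA: "hh \<delta> (diameter A) = 0" using a(3) by (simp add: hh_def)
    have hf: "hh \<delta> (diameter (f ` A)) = 0" using hyp(4)[of "f ` A"] H by (simp add: hh_def)
    have hg: "hh \<delta> (diameter (g ` A)) = 0" using hyp(4)[of "g ` A"] H by (simp add: hh_def)
    have e1: "Sf f \<delta> q (f ` A) = Sf f \<delta> q A / q" by (rule Sf_f[OF h X a(1,2) dl q(1,2) hA])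
    have e2: "Sf f \<delta> q (g ` A) = q * Sf f \<delta> q A" by (rule Sf_g[OF h X a(1,2) dl q(1,2) hg])
    have e3: "Sf g \<delta> q (g ` A) = Sf g \<delta> q A / q" by (rule Sf_f[OF h' X a(1,2) dl q(1,2) hA])
    have e4: "Sf g \<delta> q (f ` A) = q * Sf g \<delta> q A" by (rule Sf_g[OF h' X a(1,2) dl q(1,2) hf])
    have "L (f ` A) + L (g ` A) = (1/q + q) * L A"
      unfolding L_def e1 e2 e3 e4 by (simp add: field_simps)
    then show ?thesis using q(3) by simp
  qed
  show ?thesis using d0 P1 P2 P3 by blast
qed

end
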